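(* For every $T\ge T_0[\varphi_1]$ and $U\in(0,T/\ln T]$, with $\mathcal{J}(T,U)=[T,T+U]$ and $\mathring{\mathcal{J}}(T,U)=[\varphi_1^{-1}(T),\varphi_1^{-1}(T+U)]$, there exists $\xi\in(\varphi_1^{-1}(T),\varphi_1^{-1}(T+U))$ with $\tilde Z(\xi)\ne0$ and $$\tilde Z^2(\xi)=\frac{|\mathcal{J}(T,U)|}{|\mathring{\mathcal{J}}(T,U)|}.$$
   Context: Let $Z(t)=e^{i\vartheta(t)}\zeta(\tfrac12+it)$ with $\vartheta(t)=-\frac t2\ln\pi+\operatorname{Im}\ln\Gamma(\frac14+\frac{it}{2})$. Let $\mu(y)$ be continuous with $\mu(y)\ge 7y\ln y$ and $\Phi(\varphi)=\int_0^{\mu[\varphi]}Z^2(t)e^{-2t/\varphi}\,dt$. A Jacob's ladder is a continuous solution $\varphi(T)$, $T\ge T_0$, of $\Phi(\varphi(T))=\int_0^T Z^2(t)\,dt$ (from the author's earlier work). Put $\varphi_1=\frac12\varphi$ (defined for $T\ge T_0[\varphi_1]$) and $\tilde Z^2(t)=\frac{Z^2(t)}{2\Phi'(\varphi(t))}$, so $\varphi_1'=\tilde Z^2$. $\varphi_1$ is increasing and $\varphi_1^{-1}(x)$ denotes the unique $t$ with $\varphi_1(t)=x$; $|I|$ denotes the length of a segment $I$. *)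

theory Defs
  imports "HOL-Analysis.Analysis"
begin

text \<open>Riemann zeta on Re s > 0, s not a pole of the factor, via the Dirichlet eta series:
  zeta s = eta s / (1 - 2 powr (1 - s)), eta s = sum over n of (-1)^(n-1) n^(-s).
  On the critical line 1 - 2 powr (1 - s) is never zero.\<close>
definition dirichlet_eta :: "complex \<Rightarrow> complex" where
  "dirichlet_eta s = (\<Sum>n. (-1) ^ n / (of_nat (Suc n)) powr s)"

definition zeta_crit :: "complex \<Rightarrow> complex" where
  "zeta_crit s = dirichlet_eta s / (1 - 2 powr (1 - s))"

definition vartheta :: "real \<Rightarrow> real" where
  "vartheta t = - (t / 2) * ln pi + Im (ln_Gamma (Complex (1/4) (t/2)))"

text \<open>Hardy's Z-function (real valued; we take the real part of the expression).\<close>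
definition hardyZ :: "real \<Rightarrow> real" where
  "hardyZ t = Re (exp (\<i> * complex_of_real (vartheta t)) * zeta_crit (Complex (1/2) t))"

definition Phi :: "(real \<Rightarrow> real) \<Rightarrow> real \<Rightarrow> real" where
  "Phi \<mu> y = integral {0..\<mu> y} (\<lambda>t. (hardyZ t)\<^sup>2 * exp (- 2 * t / y))"

definition jacobs_ladder :: "(real \<Rightarrow> real) \<Rightarrow> (real \<Rightarrow> real) \<Rightarrow> real \<Rightarrow> bool" where
  "jacobs_ladder \<mu> \<phi> T0 \<longleftrightarrow> continuous_on {T0..} \<phi> \<and>
     (\<forall>T\<ge>T0. Phi \<mu> (\<phi> T) = integral {0..T} (\<lambda>t. (hardyZ t)\<^sup>2))"

definition Ztilde_sq :: "(real \<Rightarrow> real) \<Rightarrow> (real \<Rightarrow> real) \<Rightarrow> real \<Rightarrow> real" where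
  "Ztilde_sq \<mu> \<phi> t = (hardyZ t)\<^sup>2 / (2 * deriv (Phi \<mu>) (\<phi> t))"

end

theory Submission
  imports Defs
begin

theorem corollary3:
  fixes \<mu> \<phi> :: "real \<Rightarrow> real" and T0 T1 :: real
  assumes mu_cont: "continuous_on {0<..} \<mu>"
    and mu_ge: "\<forall>y>0. \<mu> y \<ge> 7 * y * ln y"
    and ladder: "jacobs_ladder \<mu> \<phi> T0"
    and phi1_incr: "strict_mono_on {T0..} (\<lambda>t. \<phi> t / 2)"
    and phi1_deriv: "\<forall>t\<ge>T0. ((\<lambda>t. \<phi> t / 2) has_real_derivative Ztilde_sq \<mu> \<phi> t) (at t within {T0..})"
    and T1_range: "\<forall>x\<ge>T1. \<exists>t\<ge>T0. \<phi> t / 2 = x"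
  shows "\<forall>T\<ge>T1. \<forall>U. 0 < U \<and> U \<le> T / ln T \<longrightarrow>
    (let inv = (\<lambda>x. THE t. t \<ge> T0 \<and> \<phi> t / 2 = x);
         J = {T..T+U}; J' = {inv T .. inv (T+U)}
     in \<exists>\<xi>. inv T < \<xi> \<and> \<xi> < inv (T+U) \<and> Ztilde_sq \<mu> \<phi> \<xi> \<noteq> 0 \<and>
            Ztilde_sq \<mu> \<phi> \<xi> = measure lborel J / measure lborel J')"
proof (intro allI impI)
  fix T U :: real
  assume T: "T \<ge> T1" and U: "0 < U \<and> U \<le> T / ln T"
  define f where "f = (\<lambda>t. \<phi> t / 2)"
  define inv where "inv = (\<lambda>x. THE t. t \<ge> T0 \<and> \<phi> t / 2 = x)"
  have inj: "\<And>s t. s \<ge> T0 \<Longrightarrow> t \<ge> T0 \<Longrightarrow> f s = f t \<Longrightarrow> s = t"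
  proof (rule ccontr)
    fix s t :: real assume h: "s \<ge> T0" "t \<ge> T0" "f s = f t" "s \<noteq> t"
    show False
    proof (cases "s < t")
      case True
      then have "f s < f t" using strict_mono_onD[OF phi1_incr, of s t] h unfolding f_def by simp
      then show False using h by simp
    next
      case False
      then have "t < s" using h by simp
      then have "f t < f s" using strict_mono_onD[OF phi1_incr, of t s] h unfolding f_def by simp
      then show False using h by simp
    qed
  qed
  have invp: "inv x \<ge> T0 \<and> f (inv x) = x" if "x \<ge> T1" for x
  proof -
    from T1_range that obtain t where t: "t \<ge> T0" "\<phi> t / 2 = x" by auto
    have "inv x = t" unfolding inv_def
    proof (rule the_equality)
      show "T0 \<le> t \<and> \<phi> t / 2 = x" using t by simp
      fix t' assume "T0 \<le> t' \<and> \<phi> t' / 2 = x"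
      then have "T0 \<le> t'" "f t' = f t" using t by (simp_all add: f_def)
      then show "t' = t" using inj[of t' t] t(1) by simp
    qed
    then show ?thesis using t by (simp add: f_def)
  qed
  define a where "a = inv T"
  define b where "b = inv (T+U)"
  have a: "a \<ge> T0" "f a = T" using invp[of T] T by (auto simp: a_def)
  have b: "b \<ge> T0" "f b = T + U" using invp[of "T+U"] T U by (auto simp: b_def)
  have ab: "a < b"
  proof (rule ccontr)
    assume "\<not> a < b"
    then have "b \<le> a" by simp
    moreover have "b \<noteq> a" using a b U by auto
    ultimately have "b < a" by simp
    then have "f b < f a" using strict_mono_onD[OF phi1_incr, of b a] a b unfolding f_def by simp
    then show False using a b U by simp
  qed
  have der: "\<And>t. t \<ge> T0 \<Longrightarrow> (f has_real_derivative Ztilde_sq \<mu> \<phi> t) (at t within {T0..})"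
    using phi1_deriv by (simp add: f_def)
  have cont: "continuous_on {a..b} f"
    unfolding continuous_on_eq_continuous_within
  proof
    fix x assume x: "x \<in> {a..b}"
    then have "x \<ge> T0" using a by auto
    have "(f has_real_derivative Ztilde_sq \<mu> \<phi> x) (at x within {a..b})"
      by (rule has_field_derivative_subset[OF der[OF \<open>x \<ge> T0\<close>]]) (use a in auto)
    then show "continuous (at x within {a..b}) f" by (rule DERIV_continuous)
  qed
  have dint: "(f has_real_derivative Ztilde_sq \<mu> \<phi> x) (at x)" if "a < x" "x < b" for x
  proof -
    have "(f has_real_derivative Ztilde_sq \<mu> \<phi> x) (at x within {T0<..})"
      by (rule has_field_derivative_subset[OF der]) (use that a in auto)
    moreover have "at x within {T0<..} = at x"
      by (rule at_within_open) (use that a in auto)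
    ultimately show ?thesis by simp
  qed
  obtain l z where z: "a < z" "z < b" "DERIV f z :> l" "f b - f a = (b - a) * l"
    using MVT[OF ab cont] dint real_differentiable_def by blast
  have lz: "l = Ztilde_sq \<mu> \<phi> z" using DERIV_unique[OF z(3) dint[OF z(1,2)]] .
  have eq: "Ztilde_sq \<mu> \<phi> z = U / (b - a)" using z(4) a b ab lz by (simp add: field_simps)
  show "let inv = (\<lambda>x. THE t. t \<ge> T0 \<and> \<phi> t / 2 = x);
         J = {T..T+U}; J' = {inv T .. inv (T+U)}
     in \<exists>\<xi>. inv T < \<xi> \<and> \<xi> < inv (T+U) \<and> Ztilde_sq \<mu> \<phi> \<xi> \<noteq> 0 \<and>
            Ztilde_sq \<mu> \<phi> \<xi> = measure lborel J / measure lborel J'"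
    unfolding Let_def inv_def[symmetric] a_def[symmetric] b_def[symmetric]
  proof (intro exI[of _ z] conjI)
    show "a < z" "z < b" by (fact z(1), fact z(2))
    show "Ztilde_sq \<mu> \<phi> z \<noteq> 0" using eq ab U by simp
    show "Ztilde_sq \<mu> \<phi> z = measure lborel {T..T + U} / measure lborel {a..b}"
      using eq ab U by simp
  qed
qed

end
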